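(* Consider a discounted MDP with finite state space $\mathcal{S}$, finite action space $\mathcal{A}$, reward vector $r$, transition matrix $P$ with $P_{sa,\tilde s}=\Pr(\tilde s\mid s,a)$, initial state distribution $\mu_0$ with full support, and discount $\gamma\in[0,1)$. Let $\theta\mapsto\pi_\theta$ be a differentiable parametrized policy with $\pi_\theta(s,a)>0$ for all $(s,a)$, and let the critic be directly parametrized by a vector $q\in\mathbb{R}^{|\mathcal{S}||\mathcal{A}|}$. Define the actor objective $J_\pi(\theta,q)=(1-\gamma)\mu_0^\top\Pi_\theta q$ and the on-policy critic objective $J_q(\theta,q)=\tfrac12(r-\Psi_\theta q)^\top D_\theta(r-\Psi_\theta q)$, where $\Psi_\theta=I-\gamma P\Pi_\theta$ and $D_\theta=\Delta(d_\theta)$. Define the Stackelberg gradient $$g_{S,\theta}=\partial_\theta J_\pi-(\partial_\theta\partial_q J_q)^\top(\partial_q^2 J_q)^{-1}(\partial_q J_\pi).$$ Then for every $q$, $$g_{S,\theta}=\partial_\theta J_\pi+\nabla_\theta\big(d_\theta^\top\delta_\theta\big)=\nabla_\theta J(\theta),$$ where $\delta_\theta=r-\Psi_\theta q$ (with $q$ held fixed) and $J(\theta)=(1-\gamma)\mu_0^\top\Pi_\theta q_\theta$ is the cumulative discounted reward objective.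
   Context: $\pi_\theta\in\mathbb{R}_+^{|\mathcal{S}||\mathcal{A}|}$ has entries $\pi_\theta(s,a)$, normalized in each state. $\Pi_\theta\in\mathbb{R}^{|\mathcal{S}|\times|\mathcal{S}||\mathcal{A}|}$ is block-diagonal with row $s$ containing $\pi_\theta(s,\cdot)^\top$, so $(\Pi_\theta v)(s)=\sum_a\pi_\theta(s,a)v(s,a)$. $q_\theta=\sum_{i\ge0}(\gamma P\Pi_\theta)^i r$. $d_\theta(s,a)=(1-\gamma)\sum_{i\ge0}\gamma^i\Pr(S_i=s,A_i=a)$ is the discounted state-action visitation distribution under $S_0\sim\mu_0$, policy $\pi_\theta$ and transitions $P$; $\Delta(v)$ is the diagonal matrix with diagonal $v$. Note $J_q$ depends on $\theta$ also through $D_\theta$. $\partial_q J_\pi$ and $\partial_q^2J_q$ are the gradient and Hessian in $q$; $\partial_\theta\partial_q J_q$ is the $|\mathcal{S}||\mathcal{A}|\times p$ matrix with entries $\partial^2 J_q/\partial q_{sa}\partial\theta_i$; $\partial_\theta J_\pi$ is the $\theta$-gradient at fixed $q$. *)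

theory Defs
  imports "HOL-Analysis.Analysis"
begin

text \<open>Vectors indexed by state-action pairs are elements of real^('s \<times> 'a);
  parameters are elements of real^'p.  The policy is a function
  pol :: real^'p \<Rightarrow> 's \<Rightarrow> 'a \<Rightarrow> real, transitions P s a s' = Pr(s' | s, a).\<close>

definition partial_deriv :: "(real^'n \<Rightarrow> real) \<Rightarrow> real^'n \<Rightarrow> 'n \<Rightarrow> real" where
  "partial_deriv f x i = deriv (\<lambda>t. f (x + t *\<^sub>R axis i 1)) 0"

definition pgrad :: "(real^'n \<Rightarrow> real) \<Rightarrow> real^'n \<Rightarrow> real^'n" where
  "pgrad f x = (\<chi> i. partial_deriv f x i)"

definition Pi_op :: "(real^'p \<Rightarrow> 's::finite \<Rightarrow> 'a::finite \<Rightarrow> real) \<Rightarrow> real^'p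
    \<Rightarrow> real^('s \<times> 'a) \<Rightarrow> 's \<Rightarrow> real" where
  "Pi_op pol \<theta> v s = (\<Sum>a\<in>UNIV. pol \<theta> s a * v $ (s, a))"

definition PPi :: "('s::finite \<Rightarrow> 'a::finite \<Rightarrow> 's \<Rightarrow> real) \<Rightarrow> (real^'p \<Rightarrow> 's \<Rightarrow> 'a \<Rightarrow> real)
    \<Rightarrow> real^'p \<Rightarrow> real^('s \<times> 'a) \<Rightarrow> real^('s \<times> 'a)" where
  "PPi P pol \<theta> v = (\<chi> sa. case sa of (s, a) \<Rightarrow> (\<Sum>s'\<in>UNIV. P s a s' * Pi_op pol \<theta> v s'))"

definition Psi :: "('s::finite \<Rightarrow> 'a::finite \<Rightarrow> 's \<Rightarrow> real) \<Rightarrow> (real^'p \<Rightarrow> 's \<Rightarrow> 'a \<Rightarrow> real)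
    \<Rightarrow> real \<Rightarrow> real^'p \<Rightarrow> real^('s \<times> 'a) \<Rightarrow> real^('s \<times> 'a)" where
  "Psi P pol \<gamma> \<theta> q = q - \<gamma> *\<^sub>R PPi P pol \<theta> q"

definition qpol :: "('s::finite \<Rightarrow> 'a::finite \<Rightarrow> 's \<Rightarrow> real) \<Rightarrow> (real^'p \<Rightarrow> 's \<Rightarrow> 'a \<Rightarrow> real)
    \<Rightarrow> real \<Rightarrow> real^('s \<times> 'a) \<Rightarrow> real^'p \<Rightarrow> real^('s \<times> 'a)" where
  "qpol P pol \<gamma> r \<theta> = (\<chi> sa. (\<Sum>i. (((\<lambda>v. \<gamma> *\<^sub>R PPi P pol \<theta> v) ^^ i) r) $ sa))"

text \<open>Pr(S_i = s, A_i = a) under S_0 ~ mu0, policy pi_theta, transitions P\<close>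
primrec sa_dist :: "('s::finite \<Rightarrow> real) \<Rightarrow> ('s \<Rightarrow> 'a::finite \<Rightarrow> 's \<Rightarrow> real)
    \<Rightarrow> (real^'p \<Rightarrow> 's \<Rightarrow> 'a \<Rightarrow> real) \<Rightarrow> real^'p \<Rightarrow> nat \<Rightarrow> 's \<times> 'a \<Rightarrow> real" where
  "sa_dist mu0 P pol \<theta> 0 = (\<lambda>(s, a). mu0 s * pol \<theta> s a)"
| "sa_dist mu0 P pol \<theta> (Suc i) =
     (\<lambda>(s', a'). (\<Sum>(s, a)\<in>UNIV. sa_dist mu0 P pol \<theta> i (s, a) * P s a s') * pol \<theta> s' a')"

definition dvis :: "('s::finite \<Rightarrow> real) \<Rightarrow> ('s \<Rightarrow> 'a::finite \<Rightarrow> 's \<Rightarrow> real)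
    \<Rightarrow> (real^'p \<Rightarrow> 's \<Rightarrow> 'a \<Rightarrow> real) \<Rightarrow> real \<Rightarrow> real^'p \<Rightarrow> 's \<times> 'a \<Rightarrow> real" where
  "dvis mu0 P pol \<gamma> \<theta> sa = (1 - \<gamma>) * (\<Sum>i. \<gamma> ^ i * sa_dist mu0 P pol \<theta> i sa)"

definition J_pi :: "('s::finite \<Rightarrow> real) \<Rightarrow> (real^'p \<Rightarrow> 's \<Rightarrow> 'a::finite \<Rightarrow> real) \<Rightarrow> real
    \<Rightarrow> real^'p \<Rightarrow> real^('s \<times> 'a) \<Rightarrow> real" where
  "J_pi mu0 pol \<gamma> \<theta> q = (1 - \<gamma>) * (\<Sum>s\<in>UNIV. mu0 s * Pi_op pol \<theta> q s)"

definition J_q :: "('s::finite \<Rightarrow> real) \<Rightarrow> ('s \<Rightarrow> 'a::finite \<Rightarrow> 's \<Rightarrow> real)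
    \<Rightarrow> (real^'p \<Rightarrow> 's \<Rightarrow> 'a \<Rightarrow> real) \<Rightarrow> real \<Rightarrow> real^('s \<times> 'a)
    \<Rightarrow> real^'p \<Rightarrow> real^('s \<times> 'a) \<Rightarrow> real" where
  "J_q mu0 P pol \<gamma> r \<theta> q =
     1/2 * (\<Sum>sa\<in>UNIV. dvis mu0 P pol \<gamma> \<theta> sa * (r $ sa - Psi P pol \<gamma> \<theta> q $ sa)^2)"

definition J_obj :: "('s::finite \<Rightarrow> real) \<Rightarrow> ('s \<Rightarrow> 'a::finite \<Rightarrow> 's \<Rightarrow> real)
    \<Rightarrow> (real^'p \<Rightarrow> 's \<Rightarrow> 'a \<Rightarrow> real) \<Rightarrow> real \<Rightarrow> real^('s \<times> 'a) \<Rightarrow> real^'p \<Rightarrow> real" where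
  "J_obj mu0 P pol \<gamma> r \<theta> = J_pi mu0 pol \<gamma> \<theta> (qpol P pol \<gamma> r \<theta>)"

definition stackelberg_grad :: "('s::finite \<Rightarrow> real) \<Rightarrow> ('s \<Rightarrow> 'a::finite \<Rightarrow> 's \<Rightarrow> real)
    \<Rightarrow> (real^'p::finite \<Rightarrow> 's \<Rightarrow> 'a \<Rightarrow> real) \<Rightarrow> real \<Rightarrow> real^('s \<times> 'a)
    \<Rightarrow> real^'p \<Rightarrow> real^('s \<times> 'a) \<Rightarrow> real^'p" where
  "stackelberg_grad mu0 P pol \<gamma> r \<theta> q =
    (let gth = pgrad (\<lambda>\<theta>'. J_pi mu0 pol \<gamma> \<theta>' q) \<theta>;
         gq = pgrad (\<lambda>q'. J_pi mu0 pol \<gamma> \<theta> q') q;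
         H = (\<chi> j k. partial_deriv (\<lambda>q'. partial_deriv (\<lambda>q''. J_q mu0 P pol \<gamma> r \<theta> q'') q' j) q k)
               :: real^('s \<times> 'a)^('s \<times> 'a);
         M = (\<chi> j i. partial_deriv (\<lambda>\<theta>'. partial_deriv (\<lambda>q'. J_q mu0 P pol \<gamma> r \<theta>' q') q j) \<theta> i)
               :: real^'p^('s \<times> 'a)
     in gth - transpose M *v (matrix_inv H *v gq))"

end

theory Submission
  imports Defs
begin

lemma sum_pair:
  fixes f :: "'s::finite \<times> 'a::finite \<Rightarrow> 'b::comm_monoid_add"
  shows "(\<Sum>k\<in>UNIV. f k) = (\<Sum>s\<in>UNIV. \<Sum>a\<in>UNIV. f (s,a))"
  by (simp add: UNIV_Times_UNIV[symmetric] sum.cartesian_product del: UNIV_Times_UNIV)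

definition Cm :: "('s::finite \<Rightarrow> 'a::finite \<Rightarrow> 's \<Rightarrow> real) \<Rightarrow> (real^'p \<Rightarrow> 's \<Rightarrow> 'a \<Rightarrow> real)
    \<Rightarrow> real \<Rightarrow> real^'p \<Rightarrow> real^('s \<times> 'a)^('s \<times> 'a)" where
  "Cm P pol \<gamma> \<theta> = (\<chi> k l. (if k = l then 1 else 0) - \<gamma> * P (fst l) (snd l) (fst k) * pol \<theta> (fst k) (snd k))"

lemma Psi_C: "Psi P pol \<gamma> \<theta> v $ l = (\<Sum>k\<in>UNIV. Cm P pol \<gamma> \<theta> $ k $ l * v $ k)"
proof -
  obtain s a where l: "l = (s,a)" by (cases l)
  have "(\<Sum>k\<in>UNIV. Cm P pol \<gamma> \<theta> $ k $ l * v $ k)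
     = (\<Sum>k\<in>UNIV. (if k = l then v $ k else 0)) - (\<Sum>k\<in>UNIV. \<gamma> * (P s a (fst k) * (pol \<theta> (fst k) (snd k) * v $ k)))"
    unfolding sum_subtractf[symmetric] by (rule sum.cong) (auto simp: Cm_def l algebra_simps)
  also have "\<dots> = v $ l - \<gamma> * (\<Sum>s'\<in>UNIV. P s a s' * (\<Sum>a'\<in>UNIV. pol \<theta> s' a' * v $ (s', a')))"
    by (simp add: sum_pair[of "\<lambda>k. \<gamma> * (P s a (fst k) * (pol \<theta> (fst k) (snd k) * v $ k))"]
         sum_distrib_left)
  finally show ?thesis unfolding Psi_def PPi_def Pi_op_def l by simp
qed

lemma pd_via:
  assumes "\<And>t. f (x + t *\<^sub>R axis i 1) = g t" "(g has_real_derivative D) (at 0)"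
  shows "partial_deriv f x i = D"
proof -
  have "(\<lambda>t. f (x + t *\<^sub>R axis i 1)) = g" using assms(1) by auto
  then show ?thesis unfolding partial_deriv_def using DERIV_imp_deriv[OF assms(2)] by simp
qed

lemma pd_hasder:
  fixes f :: "real^'n \<Rightarrow> real"
  assumes "(f has_derivative f') (at x)"
  shows "partial_deriv f x i = f' (axis i 1)"
proof -
  have lin: "linear f'" using assms has_derivative_linear by blast
  have "((\<lambda>t. x + t *\<^sub>R axis i 1) has_derivative (\<lambda>t. t *\<^sub>R axis i 1)) (at 0)"
    by (auto intro!: derivative_eq_intros)
  moreover have "(f has_derivative f') (at (x + 0 *\<^sub>R axis i 1))" using assms by simp
  ultimately have "((\<lambda>t. f (x + t *\<^sub>R axis i 1)) has_derivative (\<lambda>t. f' (t *\<^sub>R axis i 1))) (at 0)"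
    using has_derivative_compose[of "\<lambda>t. x + t *\<^sub>R axis i 1" _ 0 UNIV f f'] by simp
  moreover have "(\<lambda>t. f' (t *\<^sub>R axis i 1)) = (*) (f' (axis i 1))"
    using linear_scale[OF lin] by (auto simp: mult.commute)
  ultimately have "((\<lambda>t. f (x + t *\<^sub>R axis i 1)) has_real_derivative f' (axis i 1)) (at 0)"
    unfolding has_field_derivative_def by simp
  then show ?thesis by (rule pd_via[OF refl])
qed

lemma pgrad_inner:
  fixes f :: "real^'n \<Rightarrow> real"
  assumes "(f has_derivative f') (at x)"
  shows "pgrad f x \<bullet> h = f' h"
proof -
  have lin: "linear f'" using assms has_derivative_linear by blast
  have h: "h = (\<Sum>i\<in>UNIV. h $ i *\<^sub>R axis i 1)"
  proof (subst vec_eq_iff, intro allI)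
    fix j
    have "(\<Sum>i\<in>UNIV. h $ i *\<^sub>R axis i 1) $ j = (\<Sum>i\<in>UNIV. if i = j then h $ i else 0)"
      unfolding sum_component by (rule sum.cong) (auto simp: axis_def)
    then show "h $ j = (\<Sum>i\<in>UNIV. h $ i *\<^sub>R axis i 1) $ j" by simp
  qed
  have "f' h = (\<Sum>i\<in>UNIV. h $ i * f' (axis i 1))"
    by (subst h) (simp add: linear_sum[OF lin] linear_scale[OF lin])
  then show ?thesis
    by (simp add: pgrad_def inner_vec_def pd_hasder[OF assms] mult.commute)
qed

locale mdp =
  fixes P :: "'s::finite \<Rightarrow> 'a::finite \<Rightarrow> 's \<Rightarrow> real"
    and mu0 :: "'s \<Rightarrow> real"
    and \<gamma> :: real
    and pol :: "real^'p::finite \<Rightarrow> 's \<Rightarrow> 'a \<Rightarrow> real"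
  assumes P_nonneg: "\<And>s a s'. P s a s' \<ge> 0"
    and P_stoch: "\<And>s a. (\<Sum>s'\<in>UNIV. P s a s') = 1"
    and mu0_pos: "\<And>s. mu0 s > 0"
    and mu0_sum: "(\<Sum>s\<in>UNIV. mu0 s) = 1"
    and gamma: "0 \<le> \<gamma>" "\<gamma> < 1"
    and pi_pos: "\<And>\<theta>' s a. pol \<theta>' s a > 0"
    and pi_sum: "\<And>\<theta>' s. (\<Sum>a\<in>UNIV. pol \<theta>' s a) = 1"
    and pi_diff: "\<And>\<theta>' s a. (\<lambda>t. pol t s a) differentiable (at \<theta>')"
begin

lemma stoch2: "(\<Sum>k\<in>UNIV. P s a (fst k) * pol \<theta> (fst k) (snd k)) = 1"
  by (simp add: sum_pair[of "\<lambda>k. P s a (fst k) * pol \<theta> (fst k) (snd k)"]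
      sum_distrib_left[symmetric] pi_sum P_stoch)

lemma rho_Suc: "sa_dist mu0 P pol \<theta> (Suc i) k =
   (\<Sum>l\<in>UNIV. sa_dist mu0 P pol \<theta> i l * P (fst l) (snd l) (fst k)) * pol \<theta> (fst k) (snd k)"
  by (cases k) (simp add: case_prod_beta')

lemma rho_0: "sa_dist mu0 P pol \<theta> 0 k = mu0 (fst k) * pol \<theta> (fst k) (snd k)"
  by (cases k) simp

declare sa_dist.simps[simp del]

lemma rho_nonneg: "0 \<le> sa_dist mu0 P pol \<theta> i k"
proof (induction i arbitrary: k)
  case 0 then show ?case using mu0_pos pi_pos by (simp add: rho_0 less_imp_le)
next
  case (Suc i) then show ?case unfolding rho_Suc
    by (intro mult_nonneg_nonneg sum_nonneg) (auto simp: P_nonneg pi_pos less_imp_le)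
qed

lemma rho_sum: "(\<Sum>k\<in>UNIV. sa_dist mu0 P pol \<theta> i k) = 1"
proof (induction i)
  case 0 then show ?case
    by (simp add: rho_0 sum_pair[of "\<lambda>k. mu0 (fst k) * pol \<theta> (fst k) (snd k)"]
      sum_distrib_left[symmetric] pi_sum mu0_sum)
next
  case (Suc i)
  have "(\<Sum>k\<in>UNIV. sa_dist mu0 P pol \<theta> (Suc i) k)
     = (\<Sum>k\<in>UNIV. \<Sum>l\<in>UNIV. sa_dist mu0 P pol \<theta> i l * (P (fst l) (snd l) (fst k) * pol \<theta> (fst k) (snd k)))"
    unfolding rho_Suc sum_distrib_right by (simp add: mult.assoc)
  also have "\<dots> = (\<Sum>l\<in>UNIV. sa_dist mu0 P pol \<theta> i l * (\<Sum>k\<in>UNIV. P (fst l) (snd l) (fst k) * pol \<theta> (fst k) (snd k)))"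
    by (subst sum.swap) (simp add: sum_distrib_left)
  also have "\<dots> = 1" using Suc by (simp add: stoch2)
  finally show ?case .
qed

lemma rho_le1: "sa_dist mu0 P pol \<theta> i k \<le> 1"
proof -
  have "sa_dist mu0 P pol \<theta> i k \<le> (\<Sum>k\<in>UNIV. sa_dist mu0 P pol \<theta> i k)"
    by (rule member_le_sum) (auto simp: rho_nonneg)
  then show ?thesis by (simp add: rho_sum)
qed

lemma rho_summable_gen: "summable (\<lambda>i. \<gamma> ^ i * sa_dist mu0 P pol \<theta> (g i) k)"
proof (rule summable_comparison_test'[of "\<lambda>i. \<gamma> ^ i"])
  show "summable (\<lambda>i. \<gamma> ^ i)" using gamma by (simp add: summable_geometric)
  fix n show "norm (\<gamma> ^ n * sa_dist mu0 P pol \<theta> (g n) k) \<le> \<gamma> ^ n"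
    using gamma rho_nonneg[of \<theta> "g n" k] rho_le1[of \<theta> "g n" k]
    by (simp add: abs_mult mult_left_le)
qed

lemma rho_summable: "summable (\<lambda>i. \<gamma> ^ i * sa_dist mu0 P pol \<theta> i k)"
  using rho_summable_gen[of \<theta> "\<lambda>i. i" k] by simp

lemma dvis_pos: "dvis mu0 P pol \<gamma> \<theta> k > 0"
proof -
  have "0 < (\<Sum>i. \<gamma> ^ i * sa_dist mu0 P pol \<theta> i k)"
    by (rule suminf_pos2[of _ 0]) (auto simp: rho_summable rho_nonneg gamma rho_0 mu0_pos pi_pos)
  then show ?thesis unfolding dvis_def using gamma by simp
qed

lemma C_dv: "(\<Sum>l\<in>UNIV. Cm P pol \<gamma> \<theta> $ k $ l * dvis mu0 P pol \<gamma> \<theta> l)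
   = (1 - \<gamma>) * mu0 (fst k) * pol \<theta> (fst k) (snd k)"
proof -
  let ?r = "sa_dist mu0 P pol \<theta>"
  let ?c = "\<lambda>l. P (fst l) (snd l) (fst k) * pol \<theta> (fst k) (snd k)"
  define S where "S = (\<Sum>i. \<gamma> ^ i * ?r i k)"
  have 1: "(\<Sum>l\<in>UNIV. Cm P pol \<gamma> \<theta> $ k $ l * dvis mu0 P pol \<gamma> \<theta> l)
     = dvis mu0 P pol \<gamma> \<theta> k - \<gamma> * (\<Sum>l\<in>UNIV. ?c l * dvis mu0 P pol \<gamma> \<theta> l)"
  proof -
    have "(\<Sum>l\<in>UNIV. Cm P pol \<gamma> \<theta> $ k $ l * dvis mu0 P pol \<gamma> \<theta> l)
      = (\<Sum>l\<in>UNIV. (if k = l then dvis mu0 P pol \<gamma> \<theta> l else 0) - \<gamma> * (?c l * dvis mu0 P pol \<gamma> \<theta> l))"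
      by (rule sum.cong) (auto simp: Cm_def algebra_simps)
    then show ?thesis by (simp add: sum_subtractf sum_distrib_left)
  qed
  have "(\<Sum>l\<in>UNIV. ?c l * dvis mu0 P pol \<gamma> \<theta> l)
      = (1 - \<gamma>) * (\<Sum>l\<in>UNIV. \<Sum>i. ?c l * (\<gamma> ^ i * ?r i l))"
  proof -
    have "?c l * dvis mu0 P pol \<gamma> \<theta> l = (1 - \<gamma>) * (\<Sum>i. ?c l * (\<gamma> ^ i * ?r i l))" for l
      unfolding dvis_def suminf_mult[OF rho_summable] by (simp add: ac_simps)
    then show ?thesis by (simp add: sum_distrib_left)
  qed
  also have "\<dots> = (1 - \<gamma>) * (\<Sum>i. \<Sum>l\<in>UNIV. ?c l * (\<gamma> ^ i * ?r i l))"
    by (subst suminf_sum) (auto intro!: summable_mult rho_summable)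
  also have "\<dots> = (1 - \<gamma>) * (\<Sum>i. \<gamma> ^ i * ?r (Suc i) k)"
    unfolding rho_Suc sum_distrib_left sum_distrib_right by (simp add: algebra_simps)
  finally have 2: "(\<Sum>l\<in>UNIV. ?c l * dvis mu0 P pol \<gamma> \<theta> l) = (1 - \<gamma>) * (\<Sum>i. \<gamma> ^ i * ?r (Suc i) k)" .
  have 3: "\<gamma> * (\<Sum>i. \<gamma> ^ i * ?r (Suc i) k) = S - ?r 0 k"
  proof -
    have "\<gamma> * (\<Sum>i. \<gamma> ^ i * ?r (Suc i) k) = (\<Sum>i. \<gamma> ^ Suc i * ?r (Suc i) k)"
      by (subst suminf_mult[symmetric])
        (auto simp: algebra_simps intro: rho_summable_gen[of _ Suc])
    also have "\<dots> = S - ?r 0 k" unfolding S_def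
      using suminf_split_head[OF rho_summable[of \<theta> k]] by simp
    finally show ?thesis .
  qed
  show ?thesis unfolding 1 2 using 3 unfolding dvis_def S_def[symmetric]
    by (simp add: rho_0 algebra_simps) (metis distrib_left mult.commute)
qed

lemma C_row: "(\<Sum>l\<in>UNIV. Cm P pol \<gamma> \<theta> $ k $ l * f l)
   = f k - \<gamma> * (\<Sum>l\<in>UNIV. P (fst l) (snd l) (fst k) * pol \<theta> (fst k) (snd k) * f l)"
proof -
  have "(\<Sum>l\<in>UNIV. Cm P pol \<gamma> \<theta> $ k $ l * f l)
    = (\<Sum>l\<in>UNIV. (if k = l then f l else 0) - \<gamma> * (P (fst l) (snd l) (fst k) * pol \<theta> (fst k) (snd k) * f l))"
    by (rule sum.cong) (auto simp: Cm_def algebra_simps)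
  then show ?thesis by (simp add: sum_subtractf sum_distrib_left)
qed

lemma C_inj:
  assumes "Cm P pol \<gamma> \<theta> *v x = 0"
  shows "x = 0"
proof -
  let ?c = "\<lambda>k l. P (fst l) (snd l) (fst k) * pol \<theta> (fst k) (snd k)"
  have c0: "0 \<le> ?c k l" for k l using P_nonneg pi_pos by (simp add: less_imp_le)
  have xk: "x $ k = \<gamma> * (\<Sum>l\<in>UNIV. ?c k l * x $ l)" for k
  proof -
    have "(Cm P pol \<gamma> \<theta> *v x) $ k = 0" using assms by simp
    then show ?thesis unfolding matrix_vector_mult_def using C_row[of \<theta> k "\<lambda>l. x $ l"] by simp
  qed
  have "\<bar>x $ k\<bar> \<le> \<gamma> * (\<Sum>l\<in>UNIV. ?c k l * \<bar>x $ l\<bar>)" for k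
  proof -
    have "\<bar>x $ k\<bar> = \<gamma> * \<bar>\<Sum>l\<in>UNIV. ?c k l * x $ l\<bar>"
      by (subst xk) (simp add: abs_mult gamma)
    also have "\<dots> \<le> \<gamma> * (\<Sum>l\<in>UNIV. \<bar>?c k l * x $ l\<bar>)"
      by (intro mult_left_mono sum_abs) (simp add: gamma)
    also have "\<dots> = \<gamma> * (\<Sum>l\<in>UNIV. ?c k l * \<bar>x $ l\<bar>)"
      by (simp add: abs_mult abs_of_nonneg P_nonneg less_imp_le[OF pi_pos])
    finally show ?thesis .
  qed
  then have "(\<Sum>k\<in>UNIV. \<bar>x $ k\<bar>) \<le> (\<Sum>k\<in>UNIV. \<gamma> * (\<Sum>l\<in>UNIV. ?c k l * \<bar>x $ l\<bar>))"
    by (rule sum_mono)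
  also have "\<dots> = \<gamma> * (\<Sum>l\<in>UNIV. \<bar>x $ l\<bar> * (\<Sum>k\<in>UNIV. ?c k l))"
    unfolding sum_distrib_left sum_distrib_right by (subst sum.swap) (simp add: ac_simps)
  also have "\<dots> = \<gamma> * (\<Sum>l\<in>UNIV. \<bar>x $ l\<bar>)"
    using stoch2 by simp
  finally have "(1 - \<gamma>) * (\<Sum>k\<in>UNIV. \<bar>x $ k\<bar>) \<le> 0" by (simp add: algebra_simps)
  moreover have "0 \<le> (\<Sum>k\<in>UNIV. \<bar>x $ k\<bar>)" by (simp add: sum_nonneg)
  ultimately have S: "(\<Sum>k\<in>UNIV. \<bar>x $ k\<bar>) = 0" using gamma
    by (simp add: mult_le_0_iff)
  have "(\<Sum>k\<in>UNIV. \<bar>x $ k\<bar>) = 0 \<longleftrightarrow> (\<forall>k\<in>UNIV. \<bar>x $ k\<bar> = 0)"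
    by (rule sum_nonneg_eq_0_iff) auto
  then have "\<forall>k\<in>UNIV. \<bar>x $ k\<bar> = 0" using S by blast
  then have "\<bar>x $ k\<bar> = 0" for k by blast
  then show ?thesis by (simp add: vec_eq_iff)
qed

lemma C_invertible: "invertible (Cm P pol \<gamma> \<theta>)"
proof -
  obtain B where "B ** Cm P pol \<gamma> \<theta> = mat 1"
    using matrix_left_invertible_ker[of "Cm P pol \<gamma> \<theta>"] C_inj by blast
  then show ?thesis unfolding invertible_def using matrix_left_right_inverse by blast
qed

lemma C_det: "det (Cm P pol \<gamma> \<theta>) \<noteq> 0"
  using C_invertible invertible_det_nz by blast

definition bv :: "real^'p \<Rightarrow> real^('s \<times> 'a)" where
  "bv \<theta> = (\<chi> k. (1 - \<gamma>) * mu0 (fst k) * pol \<theta> (fst k) (snd k))"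

lemma dvis_cramer: "dvis mu0 P pol \<gamma> \<theta> k =
  det (\<chi> i j. if j = k then bv \<theta> $ i else Cm P pol \<gamma> \<theta> $ i $ j) / det (Cm P pol \<gamma> \<theta>)"
proof -
  have "Cm P pol \<gamma> \<theta> *v (\<chi> l. dvis mu0 P pol \<gamma> \<theta> l) = bv \<theta>"
    by (simp add: vec_eq_iff matrix_vector_mult_def C_dv bv_def)
  then have "(\<chi> l. dvis mu0 P pol \<gamma> \<theta> l) =
     (\<chi> k. det (\<chi> i j. if j = k then bv \<theta> $ i else Cm P pol \<gamma> \<theta> $ i $ j) / det (Cm P pol \<gamma> \<theta>))"
    by (rule cramer[OF C_det, THEN iffD1])
  from arg_cong[OF this, of "\<lambda>v. v $ k"] show ?thesis by simp
qed

lemma differentiable_prod':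
  fixes f :: "'i \<Rightarrow> 'x::real_normed_vector \<Rightarrow> real"
  assumes "\<And>i. i \<in> I \<Longrightarrow> f i differentiable (at x)"
  shows "(\<lambda>x. \<Prod>i\<in>I. f i x) differentiable (at x)"
proof -
  from assms obtain f' where "\<And>i. i \<in> I \<Longrightarrow> (f i has_derivative f' i) (at x)"
    unfolding differentiable_def by metis
  then show ?thesis unfolding differentiable_def by (blast intro: has_derivative_prod)
qed

lemma det_differentiable:
  fixes A :: "'x::real_normed_vector \<Rightarrow> real^'n^'n"
  assumes "\<And>i j. (\<lambda>t. A t $ i $ j) differentiable (at x)"
  shows "(\<lambda>t. det (A t)) differentiable (at x)"
  unfolding det_def
  by (intro differentiable_sum differentiable_mult differentiable_prod' ballI assms finite_permutations
      differentiable_const) simp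

lemma pol_diff: "(\<lambda>t. pol t (fst k) (snd k)) differentiable (at x)"
  by (rule pi_diff)

lemma C_diff: "(\<lambda>t. Cm P pol \<gamma> t $ i $ j) differentiable (at x)"
  unfolding Cm_def by (simp add: pol_diff)

lemma bv_diff: "(\<lambda>t. bv t $ i) differentiable (at x)"
  unfolding bv_def by (simp add: pol_diff)

lemma dvis_diff: "(\<lambda>t. dvis mu0 P pol \<gamma> t k) differentiable (at x)"
proof -
  have "(\<lambda>t. det (\<chi> i j. if j = k then bv t $ i else Cm P pol \<gamma> t $ i $ j)) differentiable (at x)"
  proof (rule det_differentiable)
    fix i j show "(\<lambda>t. (\<chi> i j. if j = k then bv t $ i else Cm P pol \<gamma> t $ i $ j) $ i $ j) differentiable (at x)"
    proof (cases "j = k")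
      case True then show ?thesis by (simp add: bv_diff)
    next
      case False then show ?thesis by (simp add: C_diff)
    qed
  qed
  then show ?thesis
    unfolding dvis_cramer
    by (rule differentiable_divide[OF _ det_differentiable[OF C_diff] C_det])
qed

end

lemma quad_deriv:
  fixes w a c :: "'k::finite \<Rightarrow> real"
  shows "((\<lambda>t. 1/2 * (\<Sum>l\<in>UNIV. w l * (a l - t * c l)^2)) has_real_derivative
     -(\<Sum>l\<in>UNIV. w l * a l * c l)) (at 0)"
  by (auto intro!: derivative_eq_intros simp: sum_negf[symmetric] sum_distrib_left algebra_simps)

lemma lin_deriv:
  fixes w a c :: "'k::finite \<Rightarrow> real"
  shows "((\<lambda>t. -(\<Sum>l\<in>UNIV. w l * (a l - t * c l) * b l)) has_real_derivative
     (\<Sum>l\<in>UNIV. w l * c l * b l)) (at 0)"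
  by (auto intro!: derivative_eq_intros simp: sum_negf[symmetric] sum_distrib_left algebra_simps)

lemma lin_deriv2:
  fixes a c :: "'k::finite \<Rightarrow> real"
  shows "((\<lambda>t. (\<Sum>l\<in>UNIV. a l * (v l + t * c l))) has_real_derivative
     (\<Sum>l\<in>UNIV. a l * c l)) (at 0)"
  by (auto intro!: derivative_eq_intros simp: sum_negf[symmetric] sum_distrib_left algebra_simps)

lemma Psi_shift: "Psi P pol \<gamma> \<theta> (v + t *\<^sub>R axis j 1) $ l = Psi P pol \<gamma> \<theta> v $ l + t * Cm P pol \<gamma> \<theta> $ j $ l"
proof -
  have "(\<Sum>k\<in>UNIV. Cm P pol \<gamma> \<theta> $ k $ l * (v + t *\<^sub>R axis j 1) $ k)
     = (\<Sum>k\<in>UNIV. Cm P pol \<gamma> \<theta> $ k $ l * v $ k) + (\<Sum>k\<in>UNIV. if k = j then t * Cm P pol \<gamma> \<theta> $ k $ l else 0)"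
    unfolding sum.distrib[symmetric] by (rule sum.cong) (auto simp: axis_def algebra_simps)
  then show ?thesis unfolding Psi_C by simp
qed

lemma dJq: "partial_deriv (\<lambda>q''. J_q mu0 P pol \<gamma> r \<theta>' q'') q' j =
   -(\<Sum>l\<in>UNIV. dvis mu0 P pol \<gamma> \<theta>' l * (r $ l - Psi P pol \<gamma> \<theta>' q' $ l) * Cm P pol \<gamma> \<theta>' $ j $ l)"
proof (rule pd_via[OF _ quad_deriv])
  fix t show "J_q mu0 P pol \<gamma> r \<theta>' (q' + t *\<^sub>R axis j 1) = 1 / 2 *
     (\<Sum>l\<in>UNIV. dvis mu0 P pol \<gamma> \<theta>' l * ((r $ l - Psi P pol \<gamma> \<theta>' q' $ l) - t * Cm P pol \<gamma> \<theta>' $ j $ l)\<^sup>2)"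
    unfolding J_q_def Psi_shift by (simp add: algebra_simps)
qed

lemma Hq: "partial_deriv (\<lambda>q'. -(\<Sum>l\<in>UNIV. w l * (r $ l - Psi P pol \<gamma> \<theta> q' $ l) * Cm P pol \<gamma> \<theta> $ j $ l)) q k
   = (\<Sum>l\<in>UNIV. w l * Cm P pol \<gamma> \<theta> $ k $ l * Cm P pol \<gamma> \<theta> $ j $ l)"
proof (rule pd_via[OF _ lin_deriv])
  fix t show "-(\<Sum>l\<in>UNIV. w l * (r $ l - Psi P pol \<gamma> \<theta> (q + t *\<^sub>R axis k 1) $ l) * Cm P pol \<gamma> \<theta> $ j $ l)
    = -(\<Sum>l\<in>UNIV. w l * ((r $ l - Psi P pol \<gamma> \<theta> q $ l) - t * Cm P pol \<gamma> \<theta> $ k $ l) * Cm P pol \<gamma> \<theta> $ j $ l)"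
    unfolding Psi_shift by (simp add: algebra_simps)
qed

lemma Jpi_alt: "J_pi mu0 pol \<gamma> \<theta> v = (\<Sum>k\<in>UNIV. (1 - \<gamma>) * mu0 (fst k) * pol \<theta> (fst k) (snd k) * v $ k)"
  unfolding J_pi_def Pi_op_def
  by (subst sum_pair) (simp add: sum_distrib_left mult.assoc)

lemma gq: "partial_deriv (\<lambda>q'. J_pi mu0 pol \<gamma> \<theta> q') q j = (1 - \<gamma>) * mu0 (fst j) * pol \<theta> (fst j) (snd j)"
proof -
  have "partial_deriv (\<lambda>q'. J_pi mu0 pol \<gamma> \<theta> q') q j =
     (\<Sum>l\<in>UNIV. (1 - \<gamma>) * mu0 (fst l) * pol \<theta> (fst l) (snd l) * (if l = j then 1 else 0))"
  proof (rule pd_via[OF _ lin_deriv2])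
    fix t show "J_pi mu0 pol \<gamma> \<theta> (q + t *\<^sub>R axis j 1) = (\<Sum>l\<in>UNIV. (1 - \<gamma>) * mu0 (fst l) * pol \<theta> (fst l) (snd l) *
        (q $ l + t * (if l = j then 1 else 0)))"
      unfolding Jpi_alt by (rule sum.cong) (auto simp: axis_def)
  qed
  also have "\<dots> = (1 - \<gamma>) * mu0 (fst j) * pol \<theta> (fst j) (snd j)"
    by (simp add: if_distrib[of "\<lambda>x. _ * x"] cong: if_cong)
  finally show ?thesis .
qed

context mdp
begin

lemma PPi_alt: "PPi P pol \<theta> v $ k = (\<Sum>l\<in>UNIV. P (fst k) (snd k) (fst l) * pol \<theta> (fst l) (snd l) * v $ l)"
proof -
  obtain s a where k: "k = (s, a)" by (cases k)
  have "PPi P pol \<theta> v $ k = (\<Sum>s'\<in>UNIV. P s a s' * (\<Sum>a'\<in>UNIV. pol \<theta> s' a' * v $ (s', a')))"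
    unfolding PPi_def Pi_op_def k by simp
  also have "\<dots> = (\<Sum>s'\<in>UNIV. \<Sum>a'\<in>UNIV. P s a s' * pol \<theta> s' a' * v $ (s', a'))"
    by (simp add: sum_distrib_left mult.assoc)
  also have "\<dots> = (\<Sum>l\<in>UNIV. P s a (fst l) * pol \<theta> (fst l) (snd l) * v $ l)"
    by (subst sum_pair) simp
  finally show ?thesis unfolding k by simp
qed

lemma PPi_bound:
  assumes "\<And>l. \<bar>v $ l\<bar> \<le> m"
  shows "\<bar>PPi P pol \<theta> v $ k\<bar> \<le> m"
proof -
  let ?c = "\<lambda>l. P (fst k) (snd k) (fst l) * pol \<theta> (fst l) (snd l)"
  have c0: "0 \<le> ?c l" for l using P_nonneg pi_pos by (simp add: less_imp_le)
  have "\<bar>PPi P pol \<theta> v $ k\<bar> \<le> (\<Sum>l\<in>UNIV. \<bar>?c l * v $ l\<bar>)"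
    unfolding PPi_alt by (rule sum_abs)
  also have "\<dots> \<le> (\<Sum>l\<in>UNIV. ?c l * m)"
  proof (rule sum_mono)
    fix l
    have "\<bar>?c l * v $ l\<bar> = ?c l * \<bar>v $ l\<bar>" by (subst abs_mult) (simp only: abs_of_nonneg[OF c0])
    also have "\<dots> \<le> ?c l * m" by (rule mult_left_mono[OF assms c0])
    finally show "\<bar>?c l * v $ l\<bar> \<le> ?c l * m" .
  qed
  also have "\<dots> = (\<Sum>l\<in>UNIV. ?c l) * m" by (rule sum_distrib_right[symmetric])
  also have "\<dots> = m" by (simp only: stoch2 mult_1)
  finally show ?thesis .
qed

lemma X_bound: "\<bar>(((\<lambda>v. \<gamma> *\<^sub>R PPi P pol \<theta> v) ^^ i) r) $ k\<bar> \<le> \<gamma> ^ i * (\<Sum>l\<in>UNIV. \<bar>r $ l\<bar>)"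
proof (induction i arbitrary: k)
  case 0 then show ?case by simp (rule member_le_sum[of _ UNIV "\<lambda>l. \<bar>r $ l\<bar>"], auto)
next
  case (Suc i)
  have "\<bar>PPi P pol \<theta> (((\<lambda>v. \<gamma> *\<^sub>R PPi P pol \<theta> v) ^^ i) r) $ k\<bar> \<le> \<gamma> ^ i * (\<Sum>l\<in>UNIV. \<bar>r $ l\<bar>)"
    by (rule PPi_bound) (rule Suc)
  then show ?case using gamma by (simp add: abs_mult mult.assoc mult_left_mono)
qed

lemma X_summable: "summable (\<lambda>i. (((\<lambda>v. \<gamma> *\<^sub>R PPi P pol \<theta> v) ^^ i) r) $ k)"
proof (rule summable_comparison_test'[of "\<lambda>i. \<gamma> ^ i * (\<Sum>l\<in>UNIV. \<bar>r $ l\<bar>)"])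
  show "summable (\<lambda>i. \<gamma> ^ i * (\<Sum>l\<in>UNIV. \<bar>r $ l\<bar>))"
    using gamma by (intro summable_mult2 summable_geometric) simp
  fix n show "norm ((((\<lambda>v. \<gamma> *\<^sub>R PPi P pol \<theta> v) ^^ n) r) $ k) \<le> \<gamma> ^ n * (\<Sum>l\<in>UNIV. \<bar>r $ l\<bar>)"
    using X_bound by simp
qed

lemma qpol_fix: "Psi P pol \<gamma> \<theta> (qpol P pol \<gamma> r \<theta>) = r"
proof -
  define X where "X i = ((\<lambda>v. \<gamma> *\<^sub>R PPi P pol \<theta> v) ^^ i) r" for i
  have XS: "X (Suc i) = \<gamma> *\<^sub>R PPi P pol \<theta> (X i)" for i unfolding X_def by simp
  have sX: "summable (\<lambda>i. X i $ k)" for k unfolding X_def by (rule X_summable)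
  have q: "qpol P pol \<gamma> r \<theta> $ k = (\<Sum>i. X i $ k)" for k unfolding qpol_def X_def by simp
  have "PPi P pol \<theta> (qpol P pol \<gamma> r \<theta>) $ k = (\<Sum>i. PPi P pol \<theta> (X i) $ k)" for k
  proof -
    have "PPi P pol \<theta> (qpol P pol \<gamma> r \<theta>) $ k =
      (\<Sum>l\<in>UNIV. \<Sum>i. P (fst k) (snd k) (fst l) * pol \<theta> (fst l) (snd l) * X i $ l)"
      unfolding PPi_alt q by (simp add: suminf_mult[OF sX])
    also have "\<dots> = (\<Sum>i. \<Sum>l\<in>UNIV. P (fst k) (snd k) (fst l) * pol \<theta> (fst l) (snd l) * X i $ l)"
      by (rule suminf_sum[symmetric]) (intro summable_mult sX)
    finally show ?thesis unfolding PPi_alt .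
  qed
  then have "\<gamma> * PPi P pol \<theta> (qpol P pol \<gamma> r \<theta>) $ k = (\<Sum>i. X (Suc i) $ k)" for k
  proof -
    have "summable (\<lambda>i. PPi P pol \<theta> (X i) $ k)"
      unfolding PPi_alt by (intro summable_sum summable_mult sX)
    have "\<gamma> * PPi P pol \<theta> (qpol P pol \<gamma> r \<theta>) $ k = \<gamma> * (\<Sum>i. PPi P pol \<theta> (X i) $ k)"
      using \<open>\<And>k. PPi P pol \<theta> (qpol P pol \<gamma> r \<theta>) $ k = (\<Sum>i. PPi P pol \<theta> (X i) $ k)\<close> by simp
    also have "\<dots> = (\<Sum>i. \<gamma> * PPi P pol \<theta> (X i) $ k)"
      by (rule suminf_mult[OF \<open>summable (\<lambda>i. PPi P pol \<theta> (X i) $ k)\<close>, symmetric])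
    finally have "\<gamma> * PPi P pol \<theta> (qpol P pol \<gamma> r \<theta>) $ k = (\<Sum>i. \<gamma> * PPi P pol \<theta> (X i) $ k)" .
    then show ?thesis by (simp add: XS)
  qed
  then have "Psi P pol \<gamma> \<theta> (qpol P pol \<gamma> r \<theta>) $ k = X 0 $ k" for k
    unfolding Psi_def using suminf_split_head[OF sX[of k]] q[of k] by simp
  then show ?thesis by (simp add: vec_eq_iff X_def)
qed

lemma colsum: "(\<Sum>k\<in>UNIV. Cm P pol \<gamma> \<theta> $ k $ l) = 1 - \<gamma>"
proof -
  have "(\<Sum>k\<in>UNIV. Cm P pol \<gamma> \<theta> $ k $ l) = (\<Sum>k\<in>UNIV. (if k = l then 1 else 0) - \<gamma> * (P (fst l) (snd l) (fst k) * pol \<theta> (fst k) (snd k)))"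
    by (rule sum.cong) (auto simp: Cm_def)
  also have "\<dots> = 1 - \<gamma>" by (simp add: sum_subtractf sum_distrib_left[symmetric] stoch2)
  finally show ?thesis .
qed

lemma Jpi_d: "J_pi mu0 pol \<gamma> \<theta> v = (\<Sum>l\<in>UNIV. dvis mu0 P pol \<gamma> \<theta> l * Psi P pol \<gamma> \<theta> v $ l)"
proof -
  have "J_pi mu0 pol \<gamma> \<theta> v = (\<Sum>k\<in>UNIV. (\<Sum>l\<in>UNIV. Cm P pol \<gamma> \<theta> $ k $ l * dvis mu0 P pol \<gamma> \<theta> l) * v $ k)"
    unfolding Jpi_alt C_dv ..
  also have "\<dots> = (\<Sum>l\<in>UNIV. dvis mu0 P pol \<gamma> \<theta> l * (\<Sum>k\<in>UNIV. Cm P pol \<gamma> \<theta> $ k $ l * v $ k))"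
    unfolding sum_distrib_left sum_distrib_right by (subst sum.swap) (simp add: ac_simps)
  finally show ?thesis unfolding Psi_C .
qed

lemma Jobj_d: "J_obj mu0 P pol \<gamma> r \<theta> = (\<Sum>l\<in>UNIV. dvis mu0 P pol \<gamma> \<theta> l * r $ l)"
  unfolding J_obj_def Jpi_d qpol_fix ..

end

lemma matrix_inv_left':
  fixes A :: "real^'n^'n"
  assumes "invertible A"
  shows "matrix_inv A ** A = mat 1"
  using assms unfolding invertible_def matrix_inv_def by (rule someI2_ex) auto

context mdp
begin

lemma Psi_diff: "(\<lambda>t. Psi P pol \<gamma> t v $ l) differentiable (at x)"
  unfolding Psi_C by (intro differentiable_sum ballI differentiable_mult C_diff differentiable_const) simp

lemma main:
  fixes r q :: "real^('s \<times> 'a)" and \<theta> :: "real^'p"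
  shows "stackelberg_grad mu0 P pol \<gamma> r \<theta> q =
           pgrad (\<lambda>\<theta>'. J_pi mu0 pol \<gamma> \<theta>' q) \<theta>
           + pgrad (\<lambda>\<theta>'. (\<Sum>sa\<in>UNIV. dvis mu0 P pol \<gamma> \<theta>' sa * (r $ sa - Psi P pol \<gamma> \<theta>' q $ sa))) \<theta>
       \<and> (J_obj mu0 P pol \<gamma> r has_derivative
            (\<lambda>h. stackelberg_grad mu0 P pol \<gamma> r \<theta> q \<bullet> h)) (at \<theta>)"
proof -
  let ?d = "dvis mu0 P pol \<gamma>"
  let ?C = "Cm P pol \<gamma>"
  define G where "G \<theta>' = (\<Sum>sa\<in>UNIV. ?d \<theta>' sa * (r $ sa - Psi P pol \<gamma> \<theta>' q $ sa))" for \<theta>'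
  define f where "f j \<theta>' = -(\<Sum>l\<in>UNIV. ?d \<theta>' l * (r $ l - Psi P pol \<gamma> \<theta>' q $ l) * ?C \<theta>' $ j $ l)" for j \<theta>'
  define Jp where "Jp \<theta>' = J_pi mu0 pol \<gamma> \<theta>' q" for \<theta>'
  have g1: "\<gamma> < 1" "1 - \<gamma> \<noteq> 0" using gamma by auto
  have "\<forall>j. \<exists>D. (f j has_derivative D) (at \<theta>)"
  proof
    fix j
    have "f j differentiable (at \<theta>)" unfolding f_def[abs_def]
      by (intro differentiable_minus differentiable_sum ballI differentiable_mult differentiable_diff
          dvis_diff Psi_diff C_diff differentiable_const) simp
    then show "\<exists>D. (f j has_derivative D) (at \<theta>)" unfolding differentiable_def .
  qed
  from choice[OF this] obtain f' where f'0: "\<forall>j. (f j has_derivative f' j) (at \<theta>)" by blast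
  have f': "\<And>j. (f j has_derivative f' j) (at \<theta>)" using f'0 by blast
  have Jpd: "Jp differentiable (at \<theta>)" unfolding Jp_def[abs_def] Jpi_alt
    by (intro differentiable_sum ballI differentiable_mult pol_diff differentiable_const) simp
  then obtain Jp' where Jp': "(Jp has_derivative Jp') (at \<theta>)" unfolding differentiable_def by blast
  have Gf: "G = (\<lambda>\<theta>'. -(\<Sum>j\<in>UNIV. f j \<theta>') / (1 - \<gamma>))"
  proof
    fix \<theta>'
    have "(\<Sum>j\<in>UNIV. f j \<theta>') = -(\<Sum>l\<in>UNIV. ?d \<theta>' l * (r $ l - Psi P pol \<gamma> \<theta>' q $ l) * (\<Sum>j\<in>UNIV. ?C \<theta>' $ j $ l))"
      unfolding f_def sum_negf sum_distrib_left by (subst sum.swap) simp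
    also have "\<dots> = -((1 - \<gamma>) * G \<theta>')" unfolding colsum G_def sum_distrib_left by (simp add: ac_simps)
    finally show "G \<theta>' = -(\<Sum>j\<in>UNIV. f j \<theta>') / (1 - \<gamma>)" using g1 by simp
  qed
  have G': "(G has_derivative (\<lambda>h. -(\<Sum>j\<in>UNIV. f' j h) / (1 - \<gamma>))) (at \<theta>)"
    unfolding Gf using g1 by (auto intro!: derivative_eq_intros f')
  define H :: "real^('s \<times> 'a)^('s \<times> 'a)" where "H = (\<chi> j k. \<Sum>l\<in>UNIV. ?d \<theta> l * ?C \<theta> $ k $ l * ?C \<theta> $ j $ l)"
  define u :: "real^('s \<times> 'a)" where "u = (\<chi> k. 1 / (1 - \<gamma>))"
  define Dg :: "real^('s \<times> 'a)^('s \<times> 'a)" where "Dg = (\<chi> i j. if i = j then ?d \<theta> i else 0)"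
  have CD: "(?C \<theta> ** Dg) $ j $ m = ?C \<theta> $ j $ m * ?d \<theta> m" for j m
    by (simp add: matrix_matrix_mult_def Dg_def if_distrib[of "\<lambda>x. _ * x"] cong: if_cong)
  have HP: "(?C \<theta> ** Dg ** transpose (?C \<theta>)) $ j $ k = (\<Sum>m\<in>UNIV. ?C \<theta> $ j $ m * ?d \<theta> m * ?C \<theta> $ k $ m)" for j k
    unfolding matrix_matrix_mult_def[of "?C \<theta> ** Dg"] by (simp add: CD transpose_def)
  have Hprod: "H = ?C \<theta> ** Dg ** transpose (?C \<theta>)"
    unfolding vec_eq_iff HP H_def by (auto intro!: sum.cong simp: ac_simps)
  have "det Dg = (\<Prod>i\<in>UNIV. ?d \<theta> i)" by (subst det_diagonal) (auto simp: Dg_def)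
  also have "\<dots> \<noteq> 0" using dvis_pos by (simp add: less_imp_neq[symmetric])
  finally have "det H \<noteq> 0" unfolding Hprod det_mul using C_det by simp
  then have Hinv: "invertible H" using invertible_det_nz by blast
  have Hu: "H *v u = bv \<theta>"
  proof -
    have "(H *v u) $ j = bv \<theta> $ j" for j
    proof -
      have "(H *v u) $ j = (\<Sum>k\<in>UNIV. (\<Sum>l\<in>UNIV. ?d \<theta> l * ?C \<theta> $ k $ l * ?C \<theta> $ j $ l) * (1 / (1 - \<gamma>)))"
        unfolding H_def u_def matrix_vector_mult_def by simp
      also have "\<dots> = (\<Sum>l\<in>UNIV. \<Sum>k\<in>UNIV. (?d \<theta> l * ?C \<theta> $ j $ l) * ?C \<theta> $ k $ l * (1 / (1 - \<gamma>)))"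
        unfolding sum_distrib_right by (subst sum.swap) (simp add: ac_simps)
      also have "\<dots> = (\<Sum>l\<in>UNIV. (?d \<theta> l * ?C \<theta> $ j $ l) * (\<Sum>k\<in>UNIV. ?C \<theta> $ k $ l) * (1 / (1 - \<gamma>)))"
      proof -
        have "\<And>a c l. (\<Sum>k\<in>UNIV. a * ?C \<theta> $ k $ l * c) = a * (\<Sum>k\<in>UNIV. ?C \<theta> $ k $ l) * c"
          by (simp add: sum_distrib_left sum_distrib_right)
        then show ?thesis by (simp only:)
      qed
      also have "\<dots> = (\<Sum>l\<in>UNIV. ?C \<theta> $ j $ l * ?d \<theta> l)" unfolding colsum using g1
        by (simp add: ac_simps)
      also have "\<dots> = bv \<theta> $ j" unfolding C_dv bv_def by simp
      finally show ?thesis .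
    qed
    then show ?thesis by (simp add: vec_eq_iff)
  qed
  have invgq: "matrix_inv H *v bv \<theta> = u"
    unfolding Hu[symmetric] matrix_vector_mul_assoc matrix_inv_left'[OF Hinv] by simp
  have gqv: "pgrad (\<lambda>q'. J_pi mu0 pol \<gamma> \<theta> q') q = bv \<theta>"
    unfolding pgrad_def gq bv_def ..
  have Hdef: "(\<chi> j k. partial_deriv (\<lambda>q'. partial_deriv (\<lambda>q''. J_q mu0 P pol \<gamma> r \<theta> q'') q' j) q k) = H"
    unfolding dJq Hq H_def ..
  have Mdef: "(\<chi> j i. partial_deriv (\<lambda>\<theta>'. partial_deriv (\<lambda>q'. J_q mu0 P pol \<gamma> r \<theta>' q') q j) \<theta> i)
      = ((\<chi> j i. f' j (axis i 1)) :: real^'p^('s \<times> 'a))"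
    unfolding dJq f_def[symmetric] pd_hasder[OF f'] ..
  have SG: "stackelberg_grad mu0 P pol \<gamma> r \<theta> q = pgrad Jp \<theta> - transpose (\<chi> j i. f' j (axis i 1)) *v u"
    unfolding stackelberg_grad_def Let_def gqv Hdef Mdef invgq Jp_def[abs_def] ..
  have Mu: "transpose ((\<chi> j i. f' j (axis i 1)) :: real^'p^('s \<times> 'a)) *v u = - pgrad G \<theta>"
    by (simp add: vec_eq_iff matrix_vector_mult_def transpose_def u_def pgrad_def pd_hasder[OF G']
        sum_divide_distrib)
  have conj1: "stackelberg_grad mu0 P pol \<gamma> r \<theta> q = pgrad Jp \<theta> + pgrad G \<theta>"
    unfolding SG Mu by simp
  have Jobj: "J_obj mu0 P pol \<gamma> r = (\<lambda>\<theta>'. Jp \<theta>' + G \<theta>')"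
  proof
    fix \<theta>'
    show "J_obj mu0 P pol \<gamma> r \<theta>' = Jp \<theta>' + G \<theta>'"
      unfolding Jobj_d Jp_def Jpi_d G_def sum.distrib[symmetric] by (simp add: algebra_simps)
  qed
  have D0: "(J_obj mu0 P pol \<gamma> r has_derivative (\<lambda>h. Jp' h + (\<lambda>h. -(\<Sum>j\<in>UNIV. f' j h) / (1 - \<gamma>)) h)) (at \<theta>)"
    unfolding Jobj by (rule has_derivative_add[OF Jp' G'])
  have E: "(\<lambda>h. Jp' h + (\<lambda>h. -(\<Sum>j\<in>UNIV. f' j h) / (1 - \<gamma>)) h) = (\<lambda>h. stackelberg_grad mu0 P pol \<gamma> r \<theta> q \<bullet> h)"
    unfolding conj1 inner_add_left pgrad_inner[OF Jp'] pgrad_inner[OF G'] ..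
  have D: "(J_obj mu0 P pol \<gamma> r has_derivative (\<lambda>h. stackelberg_grad mu0 P pol \<gamma> r \<theta> q \<bullet> h)) (at \<theta>)"
    using D0 unfolding E .
  have C1: "stackelberg_grad mu0 P pol \<gamma> r \<theta> q =
           pgrad (\<lambda>\<theta>'. J_pi mu0 pol \<gamma> \<theta>' q) \<theta>
           + pgrad (\<lambda>\<theta>'. (\<Sum>sa\<in>UNIV. dvis mu0 P pol \<gamma> \<theta>' sa * (r $ sa - Psi P pol \<gamma> \<theta>' q $ sa))) \<theta>"
    using conj1 unfolding Jp_def[abs_def] G_def[abs_def] .
  show ?thesis using C1 D by blast
qed

end

theorem theorem3:
  fixes P :: "'s::finite \<Rightarrow> 'a::finite \<Rightarrow> 's \<Rightarrow> real"
    and mu0 :: "'s \<Rightarrow> real"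
    and r :: "real^('s \<times> 'a)"
    and \<gamma> :: real
    and pol :: "real^'p::finite \<Rightarrow> 's \<Rightarrow> 'a \<Rightarrow> real"
    and \<theta> :: "real^'p"
    and q :: "real^('s \<times> 'a)"
  assumes P_nonneg: "\<And>s a s'. P s a s' \<ge> 0"
    and P_stoch: "\<And>s a. (\<Sum>s'\<in>UNIV. P s a s') = 1"
    and mu0_pos: "\<And>s. mu0 s > 0"
    and mu0_sum: "(\<Sum>s\<in>UNIV. mu0 s) = 1"
    and gamma: "0 \<le> \<gamma>" "\<gamma> < 1"
    and pi_pos: "\<And>\<theta>' s a. pol \<theta>' s a > 0"
    and pi_sum: "\<And>\<theta>' s. (\<Sum>a\<in>UNIV. pol \<theta>' s a) = 1"
    and pi_diff: "\<And>\<theta>' s a. (\<lambda>t. pol t s a) differentiable (at \<theta>')"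
  shows "stackelberg_grad mu0 P pol \<gamma> r \<theta> q =
           pgrad (\<lambda>\<theta>'. J_pi mu0 pol \<gamma> \<theta>' q) \<theta>
           + pgrad (\<lambda>\<theta>'. (\<Sum>sa\<in>UNIV. dvis mu0 P pol \<gamma> \<theta>' sa * (r $ sa - Psi P pol \<gamma> \<theta>' q $ sa))) \<theta>
       \<and> (J_obj mu0 P pol \<gamma> r has_derivative
            (\<lambda>h. stackelberg_grad mu0 P pol \<gamma> r \<theta> q \<bullet> h)) (at \<theta>)"
proof -
  interpret mdp P mu0 \<gamma> pol
    by (rule mdp.intro[OF P_nonneg P_stoch mu0_pos mu0_sum gamma pi_pos pi_sum pi_diff])
  show ?thesis by (rule main)
qed

end
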